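(* The $\mathfrak{gl}_{1|1}[t]$-module $\mathcal V^S$ is cyclic, generated by $v_1^{\otimes n}=v_1\otimes\cdots\otimes v_1$.
   Context: $\mathbb{C}^{1|1}$ has basis $v_1$ (even), $v_2$ (odd), $|1|=\bar0,|2|=\bar1$; $\mathfrak{gl}_{1|1}$ has basis $e_{ij}$ of parity $|i|+|j|$, acting by $e_{ij}v_r=\delta_{jr}v_i$. $\mathfrak{gl}_{1|1}[t]=\mathfrak{gl}_{1|1}\otimes\mathbb{C}[t]$ with basis $e_{ij}[r]=e_{ij}\otimes t^r$ and pointwise supercommutator. $\mathcal V=(\mathbb{C}^{1|1})^{\otimes n}\otimes\mathbb{C}[z_1,\dots,z_n]$ is a $\mathfrak{gl}_{1|1}[t]$-module via $e_{ij}[r](p\,w_1\otimes\cdots\otimes w_n)=p\sum_{s=1}^n(-1)^{(|w_1|+\cdots+|w_{s-1}|)(|i|+|j|)}z_s^r\,w_1\otimes\cdots\otimes e_{ij}w_s\otimes\cdots\otimes w_n$ for $p\in\mathbb{C}[\boldsymbol z]$ and homogeneous $w_s$. The standard $\mathfrak S_n$-action is $s_i:\boldsymbol f(\dots,z_i,z_{i+1},\dots)\mapsto P^{(i,i+1)}\boldsymbol f(\dots,z_{i+1},z_i,\dots)$ with $P^{(i,i+1)}$ the graded flip of factors $i,i+1$; $\mathcal V^S$ is its invariant subspace, which is a $\mathfrak{gl}_{1|1}[t]$-submodule. *)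

theory Defs
  imports Complex_Main
begin

text \<open>Coordinate model of \<open>\<V> = (\<complex>^{1|1})^{\<otimes>n} \<otimes> \<complex>[z_1..z_n]\<close>.
  Basis index of \<open>\<complex>^{1|1}\<close>: \<open>False\<close> = \<open>v_1\<close> (even), \<open>True\<close> = \<open>v_2\<close> (odd);
  so the parity of index \<open>b\<close> is \<open>b\<close> itself.  A pure tensor
  \<open>v_{w_1} \<otimes> ... \<otimes> v_{w_n}\<close> is a list \<open>w\<close> of length n; a monomial
  \<open>z_1^{m 0} ... z_n^{m (n-1)}\<close> is an exponent function \<open>m\<close> vanishing at k >= n
  (variable \<open>z_{k+1}\<close> has index k).  An element of \<open>\<V>\<close> is a finitely
  supported coefficient function on pairs (w, m).\<close>

type_synonym vec = "bool list \<times> (nat \<Rightarrow> nat) \<Rightarrow> complex"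

definition Vsp :: "nat \<Rightarrow> vec set" where
  "Vsp n = {f. finite {x. f x \<noteq> 0} \<and>
     (\<forall>w m. f (w, m) \<noteq> 0 \<longrightarrow> length w = n \<and> (\<forall>k\<ge>n. m k = 0))}"

text \<open>Action of \<open>e_{ij}[r]\<close> (indices \<open>i j\<close> as booleans, parity of \<open>e_{ij}\<close> is \<open>i \<noteq> j\<close>):
  on a basis vector it replaces, at each position s with letter j, the letter by i,
  multiplies by \<open>z_s^r\<close> and by the Koszul sign
  \<open>(-1)^{(|w_1|+...+|w_{s-1}|)(|i|+|j|)}\<close>.  Below is the coefficient form.\<close>

definition e_act :: "nat \<Rightarrow> bool \<Rightarrow> bool \<Rightarrow> nat \<Rightarrow> vec \<Rightarrow> vec" where
  "e_act n i j r f = (\<lambda>(w, m). \<Sum>s<n.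
      if length w = n \<and> w ! s = i \<and> r \<le> m s
      then (-1) ^ (card {t. t < s \<and> w ! t} * (if i \<noteq> j then 1 else 0))
           * f (w[s := j], m(s := m s - r))
      else 0)"

definition swap_act :: "nat \<Rightarrow> vec \<Rightarrow> vec" where
  "swap_act k f = (\<lambda>(w, m).
      (if w ! k \<and> w ! Suc k then -1 else 1)
      * f (w[k := w ! Suc k, Suc k := w ! k], m(k := m (Suc k), Suc k := m k)))"

definition VS :: "nat \<Rightarrow> vec set" where
  "VS n = {f \<in> Vsp n. \<forall>k. Suc k < n \<longrightarrow> swap_act k f = f}"

definition vone :: "nat \<Rightarrow> vec" where
  "vone n = (\<lambda>x. if x = (replicate n False, (\<lambda>_. 0)) then 1 else 0)"

inductive_set gen_submod :: "nat \<Rightarrow> vec \<Rightarrow> vec set" for n :: nat and v :: vec where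
  base: "v \<in> gen_submod n v"
| act: "f \<in> gen_submod n v \<Longrightarrow> e_act n i j r f \<in> gen_submod n v"
| add: "f \<in> gen_submod n v \<Longrightarrow> g \<in> gen_submod n v \<Longrightarrow> (\<lambda>x. f x + g x) \<in> gen_submod n v"
| smult: "f \<in> gen_submod n v \<Longrightarrow> (\<lambda>x. c * f x) \<in> gen_submod n v"

end

theory Submission imports Defs "HOL-Library.Multiset" "HOL-Library.Product_Lexorder" begin

abbreviation tw :: "nat \<Rightarrow> bool list \<Rightarrow> bool list" where
  "tw k w \<equiv> w[k := w ! Suc k, Suc k := w ! k]"
abbreviation tm :: "nat \<Rightarrow> (nat \<Rightarrow> nat) \<Rightarrow> nat \<Rightarrow> nat" where
  "tm k m \<equiv> m(k := m (Suc k), Suc k := m k)"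
definition sg :: "bool list \<Rightarrow> nat \<Rightarrow> complex" where
  "sg w k = (if w ! k \<and> w ! Suc k then -1 else 1)"
definition cnt :: "bool list \<Rightarrow> nat \<Rightarrow> nat" where
  "cnt w s = card {t. t < s \<and> w ! t}"

lemma sg_sq: "sg w k * sg w k = 1" by (simp add: sg_def)

lemma swap_eq: "swap_act k f = f \<Longrightarrow> f (w, m) = sg w k * f (tw k w, tm k m)"
  by (drule fun_cong[where x="(w,m)"]) (simp add: swap_act_def sg_def)

lemma VS_swap: assumes "f \<in> VS n" "Suc k < n"
  shows "f (tw k w, tm k m) = sg w k * f (w, m)"
proof -
  have "swap_act k f = f" using assms by (simp add: VS_def)
  hence "f (w, m) = sg w k * f (tw k w, tm k m)" by (rule swap_eq)
  hence "sg w k * f (w, m) = sg w k * sg w k * f (tw k w, tm k m)" by simp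
  thus ?thesis by (simp add: sg_sq)
qed

lemma cnt_Suc: "cnt w (Suc s) = cnt w s + (if w ! s then 1 else 0)"
proof -
  have "{t. t < Suc s \<and> w ! t} = {t. t < s \<and> w ! t} \<union> (if w ! s then {s} else {})"
    by (auto simp: less_Suc_eq)
  thus ?thesis unfolding cnt_def by (auto simp: card_insert_if)
qed

lemma cnt_tw: "Suc k < length w \<Longrightarrow> cnt (tw k w) s = (if s = Suc k then cnt w k + (if w ! Suc k then 1 else 0) else cnt w s)"
proof (induction s)
  case 0 then show ?case by (simp add: cnt_def)
next
  case (Suc s)
  show ?case
  proof (cases "s < k")
    case True then show ?thesis using Suc by (simp add: cnt_Suc nth_list_update)
  next
    case False
    show ?thesis
    proof (cases "s = k")
      case True then show ?thesis using Suc
        by (auto simp: cnt_Suc nth_list_update)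
    next
      case False2: False
      show ?thesis
      proof (cases "s = Suc k")
        case True then show ?thesis using Suc
          by (auto simp: cnt_Suc nth_list_update)
      next
        case False
        then show ?thesis using Suc False2 \<open>\<not> s < k\<close> by (simp add: cnt_Suc)
      qed
    qed
  qed
qed

definition eT :: "nat \<Rightarrow> bool \<Rightarrow> bool \<Rightarrow> nat \<Rightarrow> vec \<Rightarrow> bool list \<Rightarrow> (nat \<Rightarrow> nat) \<Rightarrow> nat \<Rightarrow> complex" where
  "eT n i j r f w m s = (if length w = n \<and> w ! s = i \<and> r \<le> m s
      then (-1) ^ (cnt w s * (if i \<noteq> j then 1 else 0)) * f (w[s := j], m(s := m s - r)) else 0)"

lemma e_act_eq: "e_act n i j r f (w, m) = (\<Sum>s<n. eT n i j r f w m s)"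
  unfolding e_act_def eT_def cnt_def by simp

lemma sum_split2: "Suc k < n \<Longrightarrow> (\<Sum>s<n. F s) = F k + F (Suc k) + (\<Sum>s\<in>{..<n} - {k, Suc k}. F s)"
proof -
  assume a: "Suc k < n"
  have "(\<Sum>s<n. F s) = F k + (\<Sum>s\<in>{..<n} - {k}. F s)"
    using a by (intro sum.remove) auto
  also have "(\<Sum>s\<in>{..<n} - {k}. F s) = F (Suc k) + (\<Sum>s\<in>{..<n} - {k} - {Suc k}. F s)"
    using a by (intro sum.remove) auto
  finally show ?thesis by (simp add: set_diff_eq add.assoc)
qed

lemma e_swap:
  assumes f: "f \<in> VS n" and k: "Suc k < n"
  shows "swap_act k (e_act n i j r f) = e_act n i j r f"
proof
  fix x :: "bool list \<times> (nat \<Rightarrow> nat)"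
  obtain w m where x: "x = (w, m)" by (cases x)
  show "swap_act k (e_act n i j r f) x = e_act n i j r f x"
  proof (cases "length w = n")
    case False
    then show ?thesis by (simp add: x swap_act_def e_act_eq eT_def)
  next
    case len: True
    have lhs: "swap_act k (e_act n i j r f) x = sg w k * (\<Sum>s<n. eT n i j r f (tw k w) (tm k m) s)"
      by (simp add: x swap_act_def e_act_eq sg_def)
    have a: "sg w k * eT n i j r f (tw k w) (tm k m) s = eT n i j r f w m s"
      if s: "s < n" "s \<noteq> k" "s \<noteq> Suc k" for s
    proof -
      have c: "cnt (tw k w) s = cnt w s" using cnt_tw[of k w s] s len k by simp
      have e1: "(tw k w)[s := j] = tw k (w[s := j])" using s by (simp add: list_update_swap)
      have e2: "(tm k m)(s := m s - r) = tm k (m(s := m s - r))" using s by (auto simp: fun_eq_iff)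
      have sy: "sg (w[s := j]) k = sg w k" using s by (simp add: sg_def)
      have ff: "f (tw k (w[s := j]), tm k (m(s := m s - r))) = sg w k * f (w[s:=j], m(s := m s - r))"
        using VS_swap[OF f k, of "w[s := j]" "m(s := m s - r)"] sy by simp
      have g: "tw k w ! s = w ! s" "tm k m s = m s" "length (tw k w) = length w" using s by auto
      show ?thesis
      proof (cases "w ! s = i \<and> r \<le> m s")
        case True
        have "eT n i j r f (tw k w) (tm k m) s = (-1) ^ (cnt w s * (if i \<noteq> j then 1 else 0)) * (sg w k * f (w[s:=j], m(s := m s - r)))"
          unfolding eT_def g c e1 e2 ff using True len by simp
        moreover have "eT n i j r f w m s = (-1) ^ (cnt w s * (if i \<noteq> j then 1 else 0)) * f (w[s:=j], m(s := m s - r))"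
          unfolding eT_def using True len by simp
        ultimately show ?thesis by (simp add: mult.left_commute[of "sg w k"] mult.assoc[symmetric] sg_sq)
      next
        case False
        then show ?thesis unfolding eT_def g by auto
      qed
    qed
    have b: "sg w k * eT n i j r f (tw k w) (tm k m) k = eT n i j r f w m (Suc k)"
    proof -
      have c: "cnt (tw k w) k = cnt w k" using cnt_tw[of k w k] len k by simp
      have c2: "cnt w (Suc k) = cnt w k + (if w ! k then 1 else 0)" by (rule cnt_Suc)
      have e1: "(tw k w)[k := j] = tw k (w[Suc k := j])" using len k by (simp add: list_update_swap)
      have e2: "(tm k m)(k := m (Suc k) - r) = tm k (m(Suc k := m (Suc k) - r))" by (auto simp: fun_eq_iff)
      have ff: "f (tw k (w[Suc k := j]), tm k (m(Suc k := m (Suc k) - r))) = sg (w[Suc k := j]) k * f (w[Suc k:=j], m(Suc k := m (Suc k) - r))"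
        by (rule VS_swap[OF f k])
      have g: "tw k w ! k = w ! Suc k" "tm k m k = m (Suc k)" "length (tw k w) = length w" using len k by (auto simp: nth_list_update)
      show ?thesis
      proof (cases "w ! Suc k = i \<and> r \<le> m (Suc k)")
        case True
        have sgn: "sg w k * sg (w[Suc k := j]) k * (-1)^(cnt w k * (if i \<noteq> j then 1 else 0))
           = (-1)^((cnt w k + (if w!k then 1 else 0)) * (if i \<noteq> j then 1 else 0))"
          using True len k by (cases "w!k"; cases i; cases j) (simp_all add: sg_def nth_list_update power_add)
        have "eT n i j r f (tw k w) (tm k m) k = (-1) ^ (cnt w k * (if i \<noteq> j then 1 else 0)) * (sg (w[Suc k := j]) k * f (w[Suc k:=j], m(Suc k := m (Suc k) - r)))"
          unfolding eT_def g c e1 e2 ff using True len by simp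
        moreover have "eT n i j r f w m (Suc k) = (-1) ^ ((cnt w k + (if w!k then 1 else 0)) * (if i \<noteq> j then 1 else 0)) * f (w[Suc k:=j], m(Suc k := m (Suc k) - r))"
          unfolding eT_def c2 using True len by simp
        ultimately show ?thesis using sgn by (simp add: algebra_simps)
      next
        case False
        then show ?thesis unfolding eT_def g by auto
      qed
    qed
    have c: "sg w k * eT n i j r f (tw k w) (tm k m) (Suc k) = eT n i j r f w m k"
    proof -
      have c: "cnt (tw k w) (Suc k) = cnt w k + (if w ! Suc k then 1 else 0)" using cnt_tw[of k w "Suc k"] len k by simp
      have e1: "(tw k w)[Suc k := j] = tw k (w[k := j])" using len k by (simp add: list_update_swap)
      have e2: "(tm k m)(Suc k := m k - r) = tm k (m(k := m k - r))" by (auto simp: fun_eq_iff)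
      have ff: "f (tw k (w[k := j]), tm k (m(k := m k - r))) = sg (w[k := j]) k * f (w[k:=j], m(k := m k - r))"
        by (rule VS_swap[OF f k])
      have g: "tw k w ! Suc k = w ! k" "tm k m (Suc k) = m k" "length (tw k w) = length w" using len k by (auto simp: nth_list_update)
      show ?thesis
      proof (cases "w ! k = i \<and> r \<le> m k")
        case True
        have sgn: "sg w k * sg (w[k := j]) k * (-1)^((cnt w k + (if w ! Suc k then 1 else 0)) * (if i \<noteq> j then 1 else 0))
           = (-1)^(cnt w k * (if i \<noteq> j then 1 else 0))"
          using True len k by (cases "w!Suc k"; cases i; cases j) (simp_all add: sg_def nth_list_update power_add)
        have "eT n i j r f (tw k w) (tm k m) (Suc k) = (-1) ^ ((cnt w k + (if w ! Suc k then 1 else 0)) * (if i \<noteq> j then 1 else 0)) * (sg (w[k := j]) k * f (w[k:=j], m(k := m k - r)))"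
          unfolding eT_def g c e1 e2 ff using True len by simp
        moreover have "eT n i j r f w m k = (-1) ^ (cnt w k * (if i \<noteq> j then 1 else 0)) * f (w[k:=j], m(k := m k - r))"
          unfolding eT_def using True len by simp
        ultimately show ?thesis using sgn by (simp add: algebra_simps)
      next
        case False
        then show ?thesis unfolding eT_def g by auto
      qed
    qed
    have "sg w k * (\<Sum>s<n. eT n i j r f (tw k w) (tm k m) s) = (\<Sum>s<n. eT n i j r f w m s)"
    proof -
      have "sg w k * (\<Sum>s<n. eT n i j r f (tw k w) (tm k m) s)
         = (\<Sum>s<n. sg w k * eT n i j r f (tw k w) (tm k m) s)" by (simp add: sum_distrib_left)
      also have "\<dots> = sg w k * eT n i j r f (tw k w) (tm k m) k + sg w k * eT n i j r f (tw k w) (tm k m) (Suc k)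
          + (\<Sum>s\<in>{..<n} - {k, Suc k}. sg w k * eT n i j r f (tw k w) (tm k m) s)"
        by (rule sum_split2[OF k])
      also have "\<dots> = eT n i j r f w m (Suc k) + eT n i j r f w m k + (\<Sum>s\<in>{..<n} - {k, Suc k}. eT n i j r f w m s)"
        using a b c by (intro arg_cong2[where f="(+)"] sum.cong) auto
      also have "\<dots> = (\<Sum>s<n. eT n i j r f w m s)" using sum_split2[OF k, of "eT n i j r f w m"] by simp
      finally show ?thesis .
    qed
    then show ?thesis using lhs by (simp add: x e_act_eq)
  qed
qed

lemma eT_nz:
  assumes "e_act n i j r f (w, m) \<noteq> 0"
  shows "\<exists>s<n. length w = n \<and> w ! s = i \<and> r \<le> m s \<and> f (w[s := j], m(s := m s - r)) \<noteq> 0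
     \<and> e_act n i j r f (w, m) = (\<Sum>s<n. eT n i j r f w m s)"
proof -
  from assms have "(\<Sum>s<n. eT n i j r f w m s) \<noteq> 0" by (simp add: e_act_eq)
  then obtain s where "s < n" "eT n i j r f w m s \<noteq> 0" by (meson lessThan_iff sum.not_neutral_contains_not_neutral)
  then show ?thesis by (auto simp: eT_def e_act_eq split: if_splits)
qed

lemma Vsp_e: assumes f: "f \<in> Vsp n" shows "e_act n i j r f \<in> Vsp n"
proof -
  let ?g = "\<lambda>s (y :: bool list \<times> (nat \<Rightarrow> nat)). ((fst y)[s := i], (snd y)(s := snd y s + r))"
  have sub: "{x. e_act n i j r f x \<noteq> 0} \<subseteq> (\<Union>s<n. ?g s ` {y. f y \<noteq> 0})"
  proof
    fix x assume "x \<in> {x. e_act n i j r f x \<noteq> 0}"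
    then obtain w m where x: "x = (w, m)" and nz: "e_act n i j r f (w, m) \<noteq> 0" by (cases x) auto
    from eT_nz[OF nz] obtain s where s: "s < n" "length w = n" "w ! s = i" "r \<le> m s"
      "f (w[s := j], m(s := m s - r)) \<noteq> 0" by blast
    have "x = ?g s (w[s := j], m(s := m s - r))" using s by (auto simp: x fun_eq_iff) (metis list_update_id)+
    then show "x \<in> (\<Union>s<n. ?g s ` {y. f y \<noteq> 0})" using s by blast
  qed
  have fin: "finite {x. f x \<noteq> 0}" using f by (simp add: Vsp_def)
  have "finite {x. e_act n i j r f x \<noteq> 0}" by (rule finite_subset[OF sub]) (use fin in auto)
  moreover have "length w = n \<and> (\<forall>k\<ge>n. m k = 0)" if nz: "e_act n i j r f (w, m) \<noteq> 0" for w m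
  proof -
    from eT_nz[OF nz] obtain s where s: "s < n" "length w = n" "w ! s = i" "r \<le> m s"
      "f (w[s := j], m(s := m s - r)) \<noteq> 0" by blast
    then have "\<forall>k\<ge>n. (m(s := m s - r)) k = 0" using f unfolding Vsp_def by blast
    then show ?thesis using s by auto
  qed
  ultimately show ?thesis by (simp add: Vsp_def)
qed

lemma VS_e: assumes "f \<in> VS n" shows "e_act n i j r f \<in> VS n"
  using assms e_swap[OF assms] Vsp_e[of f n] by (simp add: VS_def)

lemma swap_act_sg: "swap_act k f (w, m) = sg w k * f (tw k w, tm k m)"
  by (simp add: swap_act_def sg_def)

lemma VS_add: assumes "f \<in> VS n" "g \<in> VS n" shows "(\<lambda>x. f x + g x) \<in> VS n"
proof -
  have "{x. f x + g x \<noteq> 0} \<subseteq> {x. f x \<noteq> 0} \<union> {x. g x \<noteq> 0}" by auto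
  moreover have "finite ({x. f x \<noteq> 0} \<union> {x. g x \<noteq> 0})" using assms by (simp add: VS_def Vsp_def)
  ultimately have "finite {x. f x + g x \<noteq> 0}" by (rule finite_subset)
  moreover have "\<forall>w m. f (w, m) + g (w, m) \<noteq> 0 \<longrightarrow> length w = n \<and> (\<forall>k\<ge>n. m k = 0)"
  proof (intro allI impI)
    fix w m assume "f (w, m) + g (w, m) \<noteq> 0"
    then have "f (w, m) \<noteq> 0 \<or> g (w, m) \<noteq> 0" by auto
    then show "length w = n \<and> (\<forall>k\<ge>n. m k = 0)" using assms unfolding VS_def Vsp_def by blast
  qed
  moreover have "swap_act k (\<lambda>x. f x + g x) = (\<lambda>x. f x + g x)" if "Suc k < n" for k
  proof
    fix x :: "bool list \<times> (nat \<Rightarrow> nat)"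
    obtain w m where x: "x = (w, m)" by (cases x)
    have e1: "swap_act k f = f" and e2: "swap_act k g = g" using assms that by (auto simp: VS_def)
    have "f (w, m) = sg w k * f (tw k w, tm k m)" using e1 by (rule swap_eq)
    moreover have "g (w, m) = sg w k * g (tw k w, tm k m)" using e2 by (rule swap_eq)
    ultimately show "swap_act k (\<lambda>x. f x + g x) x = f x + g x"
      by (simp add: x swap_act_sg distrib_left)
  qed
  ultimately show ?thesis by (simp add: VS_def Vsp_def)
qed

lemma VS_smult: assumes "f \<in> VS n" shows "(\<lambda>x. c * f x) \<in> VS n"
proof -
  have "{x. c * f x \<noteq> 0} \<subseteq> {x. f x \<noteq> 0}" by auto
  moreover have "finite {x. f x \<noteq> 0}" using assms by (simp add: VS_def Vsp_def)
  ultimately have "finite {x. c * f x \<noteq> 0}" by (rule finite_subset)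
  moreover have "\<forall>w m. c * f (w, m) \<noteq> 0 \<longrightarrow> length w = n \<and> (\<forall>k\<ge>n. m k = 0)"
  proof (intro allI impI)
    fix w m assume "c * f (w, m) \<noteq> 0"
    then have "f (w, m) \<noteq> 0" by auto
    then show "length w = n \<and> (\<forall>k\<ge>n. m k = 0)" using assms unfolding VS_def Vsp_def by blast
  qed
  moreover have "swap_act k (\<lambda>x. c * f x) = (\<lambda>x. c * f x)" if "Suc k < n" for k
  proof
    fix x :: "bool list \<times> (nat \<Rightarrow> nat)"
    obtain w m where x: "x = (w, m)" by (cases x)
    have "swap_act k f = f" using assms that by (auto simp: VS_def)
    then have h: "f (w, m) = sg w k * f (tw k w, tm k m)" by (rule swap_eq)
    have "swap_act k (\<lambda>x. c * f x) x = sg w k * (c * f (tw k w, tm k m))" by (simp add: x swap_act_sg)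
    also have "\<dots> = c * (sg w k * f (tw k w, tm k m))" by (rule mult.left_commute)
    also have "\<dots> = c * f x" by (simp add: x h)
    finally show "swap_act k (\<lambda>x. c * f x) x = c * f x" .
  qed
  ultimately show ?thesis by (simp add: VS_def Vsp_def)
qed

lemma tw_tw: "Suc k < length w \<Longrightarrow> tw k (tw k w) = w"
  by (rule nth_equalityI) (auto simp: nth_list_update)

lemma tm_tm: "tm k (tm k m) = m" by (auto simp: fun_eq_iff)

lemma vone_VS: "vone n \<in> VS n"
proof -
  have "{x. vone n x \<noteq> 0} = {(replicate n False, \<lambda>_. 0)}" by (auto simp: vone_def)
  then have "vone n \<in> Vsp n" by (auto simp: Vsp_def vone_def)
  moreover have "swap_act k (vone n) = vone n" if k: "Suc k < n" for k
  proof
    fix x :: "bool list \<times> (nat \<Rightarrow> nat)"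
    obtain w m where x: "x = (w, m)" by (cases x)
    have trep: "tw k (replicate n False) = replicate n False"
      using k by (auto intro!: nth_equalityI simp: nth_list_update split: if_splits)
    have A: "(tw k w = replicate n False) = (w = replicate n False)"
    proof
      assume a: "tw k w = replicate n False"
      then have "length w = n" by (metis length_list_update length_replicate)
      then have "w = tw k (tw k w)" using tw_tw k by simp
      also have "\<dots> = replicate n False" unfolding a by (rule trep)
      finally show "w = replicate n False" .
    next
      assume "w = replicate n False" then show "tw k w = replicate n False" using trep by simp
    qed
    have B: "(tm k m = (\<lambda>_. 0)) = (m = (\<lambda>_. 0))"
    proof
      assume a: "tm k m = (\<lambda>_. 0)"
      have "m = tm k (tm k m)" by (simp only: tm_tm)
      also have "\<dots> = tm k (\<lambda>_. 0)" by (simp only: a)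
      also have "\<dots> = (\<lambda>_. 0)" by (simp add: fun_eq_iff)
      finally show "m = (\<lambda>_. 0)" .
    qed (simp add: fun_eq_iff)
    have sg1: "sg (replicate n False) k = 1" using k by (simp add: sg_def)
    show "swap_act k (vone n) x = vone n x"
    proof (cases "w = replicate n False \<and> m = (\<lambda>_. 0)")
      case True
      then show ?thesis using A B sg1 by (simp add: x swap_act_sg vone_def)
    next
      case False
      then have "\<not> (tw k w = replicate n False \<and> tm k m = (\<lambda>_. 0))" using A B by blast
      then have "vone n (tw k w, tm k m) = 0" unfolding vone_def by auto
      moreover have "vone n (w, m) = 0" using False unfolding vone_def by auto
      ultimately show ?thesis by (simp add: x swap_act_sg)
    qed
  qed
  ultimately show ?thesis by (simp add: VS_def)
qed

lemma M_VS: "f \<in> gen_submod n (vone n) \<Longrightarrow> f \<in> VS n"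
  by (induction rule: gen_submod.induct) (auto intro: vone_VS VS_e VS_add VS_smult)

definition ps :: "nat \<Rightarrow> bool list \<times> (nat \<Rightarrow> nat) \<Rightarrow> (bool \<times> nat) list" where
  "ps n x = map (\<lambda>s. (fst x ! s, snd x s)) [0..<n]"
definition DD :: "nat \<Rightarrow> bool list \<times> (nat \<Rightarrow> nat) \<Rightarrow> (bool \<times> nat) multiset" where
  "DD n x = mset (ps n x)"
definition lev :: "nat \<Rightarrow> bool list \<times> (nat \<Rightarrow> nat) \<Rightarrow> nat" where
  "lev n x = size (filter_mset (\<lambda>u. \<not> fst u \<and> snd u \<noteq> 0) (DD n x))"
definition valid :: "nat \<Rightarrow> bool list \<times> (nat \<Rightarrow> nat) \<Rightarrow> bool" where
  "valid n x = (length (fst x) = n \<and> (\<forall>k\<ge>n. snd x k = 0))"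
definition dec :: "nat \<Rightarrow> bool list \<times> (nat \<Rightarrow> nat) \<Rightarrow> bool" where
  "dec n x = (\<forall>s. Suc s < n \<longrightarrow> (fst x ! Suc s, snd x (Suc s)) \<le> (fst x ! s, snd x s))"

lemma length_ps[simp]: "length (ps n x) = n" by (simp add: ps_def)
lemma nth_ps[simp]: "s < n \<Longrightarrow> ps n x ! s = (fst x ! s, snd x s)" by (simp add: ps_def)

lemma DD_upd: assumes "s < n" "length w = n"
  shows "DD n (w[s := b], m(s := e)) = add_mset (b, e) (DD n (w, m) - {#(w ! s, m s)#})"
proof -
  have "ps n (w[s := b], m(s := e)) = (ps n (w, m))[s := (b, e)]"
    using assms by (intro nth_equalityI) (auto simp: nth_list_update)
  then show ?thesis using assms by (simp add: DD_def mset_update)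
qed

lemma DD_swap: assumes "Suc k < n" "length w = n"
  shows "DD n (tw k w, tm k m) = DD n (w, m)"
proof -
  have "ps n (tw k w, tm k m) = (ps n (w, m))[k := ps n (w, m) ! Suc k, Suc k := ps n (w, m) ! k]"
    using assms by (intro nth_equalityI) (auto simp: nth_list_update)
  moreover have "(ps n (w, m))[k := ps n (w, m) ! Suc k, Suc k := ps n (w, m) ! k] = (ps n (w, m))[Suc k := ps n (w, m) ! k, k := ps n (w, m) ! Suc k]"
    by (rule list_update_swap) simp
  ultimately show ?thesis using assms mset_swap[of k "ps n (w,m)" "Suc k"] by (simp add: DD_def)
qed

lemma mem_DD: "s < n \<Longrightarrow> (w ! s, m s) \<in># DD n (w, m)"
  by (simp add: DD_def ps_def)

lemma DD_mem: "u \<in># DD n (w, m) \<Longrightarrow> \<exists>s<n. u = (w ! s, m s)"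
  by (auto simp: DD_def ps_def)

lemma Vsp_valid: "f \<in> Vsp n \<Longrightarrow> f x \<noteq> 0 \<Longrightarrow> valid n x"
  by (cases x) (auto simp: Vsp_def valid_def)

lemma dec_mono: assumes "dec n (w, m)" "s \<le> t" "t < n"
  shows "(w ! t, m t) \<le> (w ! s, m s)"
  using assms(2,3)
proof (induction t)
  case 0 then show ?case by simp
next
  case (Suc t)
  show ?case
  proof (cases "s = Suc t")
    case True then show ?thesis by simp
  next
    case False
    then have "(w ! t, m t) \<le> (w ! s, m s)" using Suc by simp
    moreover have "(w ! Suc t, m (Suc t)) \<le> (w ! t, m t)" using assms(1) Suc.prems unfolding dec_def by auto
    ultimately show ?thesis by (rule order_trans[rotated])
  qed
qed

lemma dec_sorted: assumes "dec n x" shows "sorted (rev (ps n x))"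
proof -
  obtain w m where x: "x = (w, m)" by (cases x)
  show ?thesis unfolding sorted_iff_nth_mono
  proof (intro allI impI)
    fix i j assume ij: "i \<le> j" "j < length (rev (ps n x))"
    then have "(w ! (n - 1 - i), m (n - 1 - i)) \<le> (w ! (n - 1 - j), m (n - 1 - j))"
      using assms by (intro dec_mono) (auto simp: x)
    then show "rev (ps n x) ! i \<le> rev (ps n x) ! j" using ij by (simp add: rev_nth x)
  qed
qed

lemma dec_unique: assumes "valid n c" "valid n c'" "dec n c" "dec n c'" "DD n c = DD n c'"
  shows "c = c'"
proof -
  have "sort (rev (ps n c')) = rev (ps n c)"
    using assms by (intro properties_for_sort dec_sorted) (simp_all add: DD_def)
  moreover have "sort (rev (ps n c')) = rev (ps n c')"
    using assms by (intro properties_for_sort dec_sorted) (simp_all add: DD_def)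
  ultimately have p: "ps n c = ps n c'" by simp
  obtain w m w' m' where c: "c = (w, m)" "c' = (w', m')" by (cases c, cases c')
  have "w = w'" using p assms(1,2) unfolding c valid_def
    by (intro nth_equalityI) (auto dest: arg_cong[where f="\<lambda>l. l ! _"] simp: ps_def)
  moreover have "m = m'"
  proof
    fix s show "m s = m' s"
    proof (cases "s < n")
      case True then show ?thesis using p nth_ps[OF True, of c] nth_ps[OF True, of c'] by (simp add: c)
    next
      case False then show ?thesis using assms(1,2) by (simp add: c valid_def)
    qed
  qed
  ultimately show ?thesis by (simp add: c)
qed

lemma dec_exists: assumes "valid n x" shows "\<exists>c. valid n c \<and> dec n c \<and> DD n c = DD n x"
proof -
  define qs where "qs = rev (sort (ps n x))"
  have lq: "length qs = n" by (simp add: qs_def)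
  define c where "c = (map fst qs, \<lambda>s. if s < n then snd (qs ! s) else 0)"
  have pc: "ps n c = qs" using lq by (intro nth_equalityI) (auto simp: c_def)
  have "valid n c" using lq by (simp add: c_def valid_def)
  moreover have "DD n c = DD n x" by (simp add: DD_def pc qs_def)
  moreover have "dec n c" unfolding dec_def
  proof (intro allI impI)
    fix s assume s: "Suc s < n"
    have so: "sorted (sort (ps n x))" by simp
    have "qs ! Suc s \<le> qs ! s" using s lq sorted_nth_mono[OF so, of "n - 1 - Suc s" "n - 1 - s"]
      by (simp add: qs_def rev_nth)
    then show "(fst c ! Suc s, snd c (Suc s)) \<le> (fst c ! s, snd c s)"
      using s lq by (simp add: c_def)
  qed
  ultimately show ?thesis by blast
qed

lemma sum_swap_weight:
  fixes h h' :: "nat \<Rightarrow> nat"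
  assumes k: "Suc k < n" and h': "\<forall>s<n. h' s = (if s = k then h (Suc k) else if s = Suc k then h k else h s)"
  shows "(\<Sum>s<n. s * h' s) + h (Suc k) = (\<Sum>s<n. s * h s) + h k"
proof -
  have r: "(\<Sum>s\<in>{..<n} - {k, Suc k}. s * h' s) = (\<Sum>s\<in>{..<n} - {k, Suc k}. s * h s)"
    using h' by (intro sum.cong) auto
  show ?thesis using sum_split2[OF k, of "\<lambda>s. s * h' s"] sum_split2[OF k, of "\<lambda>s. s * h s"] r h' k
    by (simp add: algebra_simps)
qed

definition phi1 :: "nat \<Rightarrow> bool list \<times> (nat \<Rightarrow> nat) \<Rightarrow> nat" where
  "phi1 n y = (\<Sum>s<n. s * (if fst y ! s then 1 else 0))"
definition phi2 :: "nat \<Rightarrow> bool list \<times> (nat \<Rightarrow> nat) \<Rightarrow> nat" where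
  "phi2 n y = (\<Sum>s<n. s * snd y s)"

lemma swap_measure:
  assumes k: "Suc k < n" and len: "length w = n" and lt: "(w ! k, m k) < (w ! Suc k, m (Suc k))"
  shows "((tw k w, tm k m), (w, m)) \<in> measures [phi1 n, phi2 n]"
proof -
  have A: "phi1 n (tw k w, tm k m) + (if w ! Suc k then 1 else 0) = phi1 n (w, m) + (if w ! k then 1 else 0)"
    unfolding phi1_def fst_conv using k len
    by (intro sum_swap_weight[where h="\<lambda>s. if w ! s then 1 else 0"]) (auto simp: nth_list_update)
  have B: "phi2 n (tw k w, tm k m) + m (Suc k) = phi2 n (w, m) + m k"
    unfolding phi2_def snd_conv using k len by (intro sum_swap_weight) auto
  show ?thesis using lt A B by (cases "w ! k"; cases "w ! Suc k") auto
qed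

lemma Z_lemma:
  assumes f: "f \<in> VS n" and c: "valid n c" "dec n c" "f c = 0"
  shows "valid n y \<Longrightarrow> DD n y = DD n c \<Longrightarrow> f y = 0"
proof (induction y rule: wf_induct[OF wf_measures[of "[phi1 n, phi2 n]"]])
  case (1 y)
  obtain w m where y: "y = (w, m)" by (cases y)
  show ?case
  proof (cases "dec n y")
    case True
    then have "y = c" using dec_unique[of n y c] 1 c by simp
    then show ?thesis using c by simp
  next
    case False
    then obtain k where k: "Suc k < n" and lt: "(w ! k, m k) < (w ! Suc k, m (Suc k))"
      unfolding dec_def y by (auto simp: not_le)
    have len: "length w = n" using 1 by (simp add: y valid_def)
    have v: "valid n (tw k w, tm k m)" using 1 k by (auto simp: y valid_def)
    have d: "DD n (tw k w, tm k m) = DD n c" using DD_swap[OF k len] 1 by (simp add: y)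
    have ms: "((tw k w, tm k m), y) \<in> measures [phi1 n, phi2 n]" using swap_measure[OF k len lt] by (simp add: y)
    have "f (tw k w, tm k m) = 0" using 1(1)[rule_format, OF ms] v d by simp
    moreover have "f (w, m) = sg w k * f (tw k w, tm k m)"
      using f k by (intro swap_eq) (simp add: VS_def)
    ultimately show ?thesis by (simp add: y)
  qed
qed

definition GG :: "nat \<Rightarrow> nat list \<Rightarrow> vec" where
  "GG n rs = foldr (\<lambda>r f. e_act n True False r f) rs (vone n)"
definition tgt :: "nat \<Rightarrow> nat list \<Rightarrow> (bool \<times> nat) multiset" where
  "tgt n rs = mset (map (\<lambda>r. (True, r)) rs) + replicate_mset (n - length rs) (False, 0)"
definition pt :: "nat \<Rightarrow> nat \<Rightarrow> nat list \<Rightarrow> bool list \<times> (nat \<Rightarrow> nat)" where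
  "pt n j rs = (map (\<lambda>s. j \<le> s \<and> s < j + length rs) [0..<n],
     \<lambda>s. if j \<le> s \<and> s < j + length rs then rs ! (s - j) else 0)"

lemma GG_M: "GG n rs \<in> gen_submod n (vone n)"
  by (induction rs) (simp_all add: GG_def gen_submod.base gen_submod.act)

lemma GG_Cons: "GG n (r # rs) = e_act n True False r (GG n rs)"
  by (simp add: GG_def)

lemma GG_supp: "length rs \<le> n \<Longrightarrow> GG n rs x \<noteq> 0 \<Longrightarrow> DD n x = tgt n rs"
proof (induction rs arbitrary: x)
  case Nil
  then have x: "x = (replicate n False, \<lambda>_. 0)" by (simp add: GG_def vone_def split: if_splits)
  have "ps n x = replicate n (False, 0)" by (intro nth_equalityI) (auto simp: x)
  then show ?case by (simp add: DD_def tgt_def)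
next
  case (Cons r rs)
  obtain w m where x: "x = (w, m)" by (cases x)
  from Cons.prems have nz: "e_act n True False r (GG n rs) (w, m) \<noteq> 0" by (simp add: GG_Cons x)
  from eT_nz[OF nz] obtain s where s: "s < n" "length w = n" "w ! s" "r \<le> m s"
     "GG n rs (w[s := False], m(s := m s - r)) \<noteq> 0" by blast
  have d1: "DD n (w[s := False], m(s := m s - r)) = tgt n rs" using Cons s by simp
  have e1: "DD n (w[s := False], m(s := m s - r)) = add_mset (False, m s - r) (DD n (w, m) - {#(True, m s)#})"
    using DD_upd[OF s(1,2)] s(3) by simp
  have e: "add_mset (False, m s - r) (DD n (w, m) - {#(True, m s)#}) = tgt n rs" using d1 e1 by simp
  have "(False, m s - r) \<in># add_mset (False, m s - r) (DD n (w, m) - {#(True, m s)#})" by simp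
  then have "(False, m s - r) \<in># tgt n rs" unfolding e .
  then have "m s - r = 0" by (auto simp: tgt_def split: if_splits)
  then have ms: "m s = r" using s by simp
  have mem: "(True, r) \<in># DD n (w, m)" using mem_DD[OF s(1), of w m] s ms by simp
  have "tgt n rs - {#(False, 0)#} = DD n (w, m) - {#(True, r)#}" using e[symmetric] ms by simp
  moreover have "n - length rs = Suc (n - length (r # rs))" using Cons.prems by simp
  ultimately have X: "DD n (w, m) - {#(True, r)#} = mset (map (\<lambda>r. (True, r)) rs) + replicate_mset (n - length (r # rs)) (False, 0)"
    by (simp add: tgt_def)
  have "DD n (w, m) = add_mset (True, r) (DD n (w, m) - {#(True, r)#})" using mem by (simp add: insert_DiffM)
  then have "DD n (w, m) = add_mset (True, r) (mset (map (\<lambda>r. (True, r)) rs) + replicate_mset (n - length (r # rs)) (False, 0))"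
    using X by simp
  then show ?case by (simp add: x tgt_def)
qed

lemma sum_delta_nat: "j < (n::nat) \<Longrightarrow> (\<forall>s<n. s \<noteq> j \<longrightarrow> F s = 0) \<Longrightarrow> (\<Sum>s<n. F s) = (F j :: complex)"
proof -
  assume a: "j < n" "\<forall>s<n. s \<noteq> j \<longrightarrow> F s = 0"
  have "(\<Sum>s<n. F s) = F j + (\<Sum>s\<in>{..<n}-{j}. F s)" using a by (intro sum.remove) auto
  also have "(\<Sum>s\<in>{..<n}-{j}. F s) = 0" using a by (intro sum.neutral) auto
  finally show ?thesis by simp
qed

lemma GG_val: "distinct rs \<Longrightarrow> j + length rs \<le> n \<Longrightarrow> GG n rs (pt n j rs) = 1"
proof (induction rs arbitrary: j)
  case Nil
  have e: "(\<lambda>s. j \<le> s \<and> s < j) = (\<lambda>_. False)" by auto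
  have "pt n j [] = (replicate n False, \<lambda>_. 0)" by (simp add: pt_def e map_replicate_const fun_eq_iff)
  then show ?case by (simp add: GG_def vone_def)
next
  case (Cons r rs)
  obtain w m where p: "pt n j (r # rs) = (w, m)" by (cases "pt n j (r # rs)")
  have w: "length w = n" "\<And>s. s < n \<Longrightarrow> w ! s = (j \<le> s \<and> s < j + Suc (length rs))"
    using p by (auto simp: pt_def)
  have m: "\<And>s. m s = (if j \<le> s \<and> s < j + Suc (length rs) then (r # rs) ! (s - j) else 0)"
    using p by (auto simp: pt_def)
  have jn: "j < n" using Cons.prems by simp
  have src: "(w[j := False], m(j := m j - r)) = pt n (Suc j) rs"
  proof -
    have "w[j := False] = fst (pt n (Suc j) rs)"
      using w jn by (intro nth_equalityI) (auto simp: pt_def nth_list_update)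
    moreover have "m(j := m j - r) = snd (pt n (Suc j) rs)"
    proof
      fix t
      show "(m(j := m j - r)) t = snd (pt n (Suc j) rs) t"
      proof (cases "t = j")
        case True then show ?thesis using m by (simp add: pt_def)
      next
        case False
        then show ?thesis using m
        proof (cases "j < t")
          case True
          then have tj: "t - j = Suc (t - Suc j)" by simp
          show ?thesis using m[of t] True \<open>t \<noteq> j\<close> by (simp add: pt_def tj)
        next
          case False
          then show ?thesis using m[of t] \<open>t \<noteq> j\<close> by (simp add: pt_def)
        qed
      qed
    qed
    ultimately show ?thesis by simp
  qed
  have cj: "cnt w j = 0" unfolding cnt_def using w jn by auto
  have wj: "w ! j" using w jn by simp
  have mj: "m j = r" using m[of j] by simp
  have ih: "GG n rs (pt n (Suc j) rs) = 1" using Cons.IH[of "Suc j"] Cons.prems by simp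
  have t1: "eT n True False r (GG n rs) w m j = 1"
    unfolding eT_def src cj using wj mj w(1) ih by simp
  have t0: "eT n True False r (GG n rs) w m s = 0" if s: "s < n" "s \<noteq> j" for s
  proof (rule ccontr)
    assume "eT n True False r (GG n rs) w m s \<noteq> 0"
    then have g: "w ! s" "GG n rs (w[s := False], m(s := m s - r)) \<noteq> 0" by (auto simp: eT_def split: if_splits)
    then have "DD n (w[s := False], m(s := m s - r)) = tgt n rs" using GG_supp Cons.prems by simp
    moreover have "(w[s := False] ! j, (m(s := m s - r)) j) = (True, r)" using s w m jn by (simp add: nth_list_update)
    ultimately have "(True, r) \<in># tgt n rs" using mem_DD[OF jn, of "w[s := False]" "m(s := m s - r)"] by simp
    then show False using Cons.prems by (auto simp: tgt_def)
  qed
  have "GG n (r # rs) (pt n j (r # rs)) = (\<Sum>s<n. eT n True False r (GG n rs) w m s)"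
    by (simp add: GG_Cons p e_act_eq)
  also have "\<dots> = eT n True False r (GG n rs) w m j" by (rule sum_delta_nat[OF jn]) (use t0 in blast)
  also have "\<dots> = 1" by (rule t1)
  finally show ?case .
qed

definition shapeok :: "nat \<Rightarrow> nat \<Rightarrow> bool list \<times> (nat \<Rightarrow> nat) \<Rightarrow> bool" where
  "shapeok n k c = (valid n c \<and> k \<le> n \<and> (\<forall>s<n. fst c ! s = (s < k))
     \<and> (\<forall>s t. s < t \<longrightarrow> t < k \<longrightarrow> snd c s \<noteq> snd c t)
     \<and> (\<forall>s t. k \<le> s \<longrightarrow> s \<le> t \<longrightarrow> t < n \<longrightarrow> snd c t \<le> snd c s))"

definition Tri :: "nat \<Rightarrow> vec \<Rightarrow> bool list \<times> (nat \<Rightarrow> nat) \<Rightarrow> bool" where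
  "Tri n g c = (g \<in> gen_submod n (vone n) \<and> g c \<noteq> 0 \<and>
     (\<forall>x. DD n x \<noteq> DD n c \<and> lev n c \<le> lev n x \<longrightarrow> g x = 0))"

lemma lev0: assumes "lev n (w, m) = 0" "s < n" "\<not> w ! s" shows "m s = 0"
proof (rule ccontr)
  assume "m s \<noteq> 0"
  then have "(w ! s, m s) \<in># filter_mset (\<lambda>u. \<not> fst u \<and> snd u \<noteq> 0) (DD n (w, m))"
    using mem_DD[OF assms(2), of w m] assms by simp
  then have "filter_mset (\<lambda>u. \<not> fst u \<and> snd u \<noteq> 0) (DD n (w, m)) \<noteq> {#}" by force
  then show False using assms(1) unfolding lev_def by (metis size_eq_0_iff_empty)
qed

lemma base_Tri:
  assumes sh: "shapeok n k c" and l0: "lev n c = 0"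
  shows "\<exists>g. Tri n g c"
proof -
  obtain w m where c: "c = (w, m)" by (cases c)
  define rs where "rs = map m [0..<k]"
  have dist: "distinct rs" using sh unfolding rs_def shapeok_def c
    by (auto simp: distinct_conv_nth) (metis nat_neq_iff)
  have lr: "length rs \<le> n" using sh by (simp add: rs_def shapeok_def)
  have cpt: "c = pt n 0 rs"
  proof -
    have "w = fst (pt n 0 rs)" using sh by (intro nth_equalityI) (auto simp: c shapeok_def valid_def pt_def rs_def)
    moreover have "m = snd (pt n 0 rs)"
    proof
      fix s show "m s = snd (pt n 0 rs) s"
      proof (cases "s < k")
        case True then show ?thesis by (simp add: pt_def rs_def)
      next
        case False
        show ?thesis
        proof (cases "s < n")
          case True then show ?thesis using lev0[of n w m s] l0 sh False by (simp add: c pt_def rs_def shapeok_def)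
        next
          case False then show ?thesis using sh \<open>\<not> s < k\<close> by (simp add: c pt_def rs_def shapeok_def valid_def)
        qed
      qed
    qed
    ultimately show ?thesis by (simp add: c)
  qed
  have v: "GG n rs c = 1" using GG_val[of rs 0 n] dist lr cpt by simp
  have "Tri n (GG n rs) c"
    unfolding Tri_def using GG_M v GG_supp[OF lr] GG_supp[OF lr, of c] by auto
  then show ?thesis by blast
qed

lemma lev_DD: "DD n x = DD n y \<Longrightarrow> lev n x = lev n y" by (simp add: lev_def)

lemma lev_upd: assumes "s < n" "length w = n"
  shows "lev n (w[s := b], m(s := e)) + (if \<not> w ! s \<and> m s \<noteq> 0 then 1 else 0)
       = lev n (w, m) + (if \<not> b \<and> e \<noteq> 0 then 1 else 0)"
proof -
  define D' where "D' = DD n (w, m) - {#(w ! s, m s)#}"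
  have D: "DD n (w, m) = add_mset (w ! s, m s) D'"
    unfolding D'_def using mem_DD[OF assms(1), of w m] by (simp add: insert_DiffM)
  have D2: "DD n (w[s := b], m(s := e)) = add_mset (b, e) D'"
    unfolding D'_def by (rule DD_upd[OF assms])
  show ?thesis unfolding lev_def D D2 by auto
qed

lemma shapeokD:
  assumes "shapeok n k (w, m)"
  shows "length w = n" "\<And>t. n \<le> t \<Longrightarrow> m t = 0" "\<And>s. s < n \<Longrightarrow> w ! s = (s < k)" "k \<le> n"
    "\<And>s t. s < t \<Longrightarrow> t < k \<Longrightarrow> m s \<noteq> m t"
    "\<And>s t. k \<le> s \<Longrightarrow> s \<le> t \<Longrightarrow> t < n \<Longrightarrow> m t \<le> m s"
  using assms by (auto simp: shapeok_def valid_def)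

lemma step_Tri:
  assumes sh: "shapeok n k c" and lc: "lev n c = Suc q"
    and IH: "\<And>c'. shapeok n k c' \<Longrightarrow> lev n c' = q \<Longrightarrow> \<exists>g. Tri n g c'"
  shows "\<exists>g. Tri n g c"
proof -
  obtain w m where c: "c = (w, m)" by (cases c)
  note S = shapeokD[OF sh[unfolded c]]
  define P where "P = {s. k \<le> s \<and> s < n \<and> m s \<noteq> 0}"
  have finP: "finite P" unfolding P_def by auto
  have "filter_mset (\<lambda>u. \<not> fst u \<and> snd u \<noteq> 0) (DD n (w, m)) \<noteq> {#}"
    using lc unfolding lev_def c by (metis Zero_not_Suc size_empty)
  then obtain u where "u \<in># filter_mset (\<lambda>u. \<not> fst u \<and> snd u \<noteq> 0) (DD n (w, m))" by (meson multiset_nonemptyE)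
  then have u: "u \<in># DD n (w, m)" "\<not> fst u" "snd u \<noteq> 0" by simp_all
  then obtain s0 where s0: "s0 < n" "u = (w ! s0, m s0)" using DD_mem by blast
  have "s0 \<in> P" using s0 u S(3)[of s0] by (auto simp: P_def)
  then have Pne: "P \<noteq> {}" by blast
  define p where "p = Max P"
  have pP: "p \<in> P" unfolding p_def using finP Pne by (rule Max_in)
  have pmax: "\<And>t. t \<in> P \<Longrightarrow> t \<le> p" unfolding p_def using finP by simp
  have kp: "k \<le> p" and pn: "p < n" and mp: "m p \<noteq> 0" using pP by (auto simp: P_def)
  define a where "a = m p"
  have a0: "0 < a" using mp by (simp add: a_def)
  have after: "\<And>t. p < t \<Longrightarrow> t < n \<Longrightarrow> m t = 0"
  proof (rule ccontr)
    fix t assume "p < t" "t < n" "m t \<noteq> 0"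
    then have "t \<in> P" using kp by (auto simp: P_def)
    then show False using pmax \<open>p < t\<close> by fastforce
  qed
  have wp: "\<not> w ! p" using S(3)[OF pn] kp by simp
  have wpid: "w[p := False] = w" using wp by (metis list_update_id)
  define c' where "c' = (w, m(p := 0))"
  have sh': "shapeok n k c'"
    unfolding shapeok_def c'_def valid_def
  proof (intro conjI allI impI)
    show "length (fst (w, m(p := 0))) = n" using S by simp
    show "snd (w, m(p := 0)) t = 0" if "n \<le> t" for t using S(2)[OF that] by simp
    show "k \<le> n" by (rule S(4))
    show "fst (w, m(p := 0)) ! s = (s < k)" if "s < n" for s using S(3)[OF that] by simp
    show "snd (w, m(p := 0)) s \<noteq> snd (w, m(p := 0)) t" if "s < t" "t < k" for s t
      using S(5)[OF that] that kp by auto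
    show "snd (w, m(p := 0)) t \<le> snd (w, m(p := 0)) s" if "k \<le> s" "s \<le> t" "t < n" for s t
      using S(6)[OF that] that after by auto
  qed
  have lc': "lev n c' = q"
    using lev_upd[OF pn S(1), where b="w ! p" and e=0 and m=m] lc wp mp wpid by (simp add: c'_def c)
  obtain g' where T': "Tri n g' c'" using IH[OF sh' lc'] by blast
  have g'M: "g' \<in> gen_submod n (vone n)" and g'c: "g' c' \<noteq> 0"
    and g'z: "\<And>x. DD n x \<noteq> DD n c' \<Longrightarrow> lev n c' \<le> lev n x \<Longrightarrow> g' x = 0"
    using T' by (auto simp: Tri_def)
  have g'VS: "g' \<in> VS n" by (rule M_VS[OF g'M])
  have run: "m s = a \<longrightarrow> g' (w, m(s := 0)) = g' c'" if "k \<le> s" "s \<le> p" for s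
    using that(2)
  proof (induction s rule: inc_induct)
    case base then show ?case unfolding c'_def by (intro impI refl)
  next
    case (step s')
    show ?case
    proof
      assume ms': "m s' = a"
      have ks': "k \<le> s'" using that step by simp
      have sn: "Suc s' < n" using step pn by simp
      have "m (Suc s') \<le> m s'" using S(6)[of s' "Suc s'"] ks' sn by simp
      moreover have "m p \<le> m (Suc s')" using S(6)[of "Suc s'" p] ks' step pn by simp
      ultimately have ms2: "m (Suc s') = a" using ms' by (simp add: a_def)
      then have e1: "g' (w, m(Suc s' := 0)) = g' c'" using step.IH by (simp add: fun_upd_def)
      have w1: "\<not> w ! s'" "\<not> w ! Suc s'" using S(3) ks' sn by auto
      have twid: "tw s' w = w" using w1 S(1) sn by (intro nth_equalityI) (auto simp: nth_list_update split: if_splits)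
      have tmid: "tm s' (m(s' := 0)) = m(Suc s' := 0)" using ms' ms2 by (auto simp: fun_eq_iff)
      have sg1: "sg w s' = 1" using w1 by (simp add: sg_def)
      have "g' (tw s' w, tm s' (m(s' := 0))) = sg w s' * g' (w, m(s' := 0))"
        by (rule VS_swap[OF g'VS sn])
      then have "g' (w, m(Suc s' := 0)) = g' (w, m(s' := 0))" by (simp only: twid tmid sg1 mult_1)
      then show "g' (w, m(s' := 0)) = g' c'" using e1 by simp
    qed
  qed
  let ?h = "e_act n False False a g'"
  have hM: "?h \<in> gen_submod n (vone n)" using g'M by (rule gen_submod.act)
  have tmeq: "eT n False False a g' w m s = (if k \<le> s \<and> m s = a then g' c' else 0)" if sn: "s < n" for s
  proof (cases "k \<le> s \<and> a \<le> m s")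
    case True
    have ws: "\<not> w ! s" using S(3)[OF sn] True by simp
    have wsid: "w[s := False] = w" using ws by (metis list_update_id)
    have eT: "eT n False False a g' w m s = g' (w, m(s := m s - a))"
      unfolding eT_def using True ws wsid S(1) by simp
    show ?thesis
    proof (cases "m s = a")
      case True
      have "s \<in> P" using \<open>k \<le> s \<and> a \<le> m s\<close> sn a0 True by (auto simp: P_def)
      then have "s \<le> p" by (rule pmax)
      then have "g' (w, m(s := 0)) = g' c'" using run[of s] \<open>k \<le> s \<and> a \<le> m s\<close> True by simp
      then show ?thesis using eT True \<open>k \<le> s \<and> a \<le> m s\<close> by simp
    next
      case False
      then have gt: "a < m s" using \<open>k \<le> s \<and> a \<le> m s\<close> by simp
      have "lev n (w[s := w ! s], m(s := m s - a)) + (if \<not> w ! s \<and> m s \<noteq> 0 then 1 else 0)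
          = lev n (w, m) + (if \<not> w ! s \<and> m s - a \<noteq> 0 then 1 else 0)" by (rule lev_upd[OF sn S(1)])
      then have ls: "lev n (w, m(s := m s - a)) = Suc q" using gt ws lc a0 wsid by (simp add: c)
      have "DD n (w, m(s := m s - a)) \<noteq> DD n c'" using lev_DD[of n "(w, m(s := m s - a))" c'] ls lc' by auto
      then have "g' (w, m(s := m s - a)) = 0" using g'z ls lc' by simp
      then show ?thesis using eT False by simp
    qed
  next
    case False
    then show ?thesis unfolding eT_def using S(3)[OF sn] by auto
  qed
  have "?h c = (\<Sum>s<n. eT n False False a g' w m s)" by (simp add: c e_act_eq)
  also have "\<dots> = (\<Sum>s<n. if k \<le> s \<and> m s = a then g' c' else 0)" using tmeq by (intro sum.cong) auto
  also have "\<dots> = (\<Sum>s\<in>{s\<in>{..<n}. k \<le> s \<and> m s = a}. g' c')" by (rule sum.inter_filter[symmetric]) simp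
  also have "\<dots> = of_nat (card {s\<in>{..<n}. k \<le> s \<and> m s = a}) * g' c'" by simp
  finally have hc: "?h c = of_nat (card {s\<in>{..<n}. k \<le> s \<and> m s = a}) * g' c'" .
  have "p \<in> {s\<in>{..<n}. k \<le> s \<and> m s = a}" using kp pn by (simp add: a_def)
  moreover have "finite {s\<in>{..<n}. k \<le> s \<and> m s = a}" by simp
  ultimately have "card {s\<in>{..<n}. k \<le> s \<and> m s = a} \<noteq> 0" using card_0_eq by blast
  then have hc0: "?h c \<noteq> 0" using hc g'c by simp
  have hz: "?h x = 0" if dx: "DD n x \<noteq> DD n c" and lx: "lev n c \<le> lev n x" for x
  proof (rule ccontr)
    assume nz: "?h x \<noteq> 0"
    obtain wx mx where x: "x = (wx, mx)" by (cases x)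
    from eT_nz[OF nz[unfolded x]] obtain s where s: "s < n" "length wx = n" "\<not> wx ! s" "a \<le> mx s"
      "g' (wx[s := False], mx(s := mx s - a)) \<noteq> 0" by blast
    have wxid: "wx[s := False] = wx" using s(3) by (metis list_update_id)
    define src where "src = (wx, mx(s := mx s - a))"
    have gs: "g' src \<noteq> 0" using s(5) wxid by (simp add: src_def)
    have lu: "lev n src + (if \<not> wx ! s \<and> mx s \<noteq> 0 then 1 else 0) = lev n x + (if \<not> False \<and> mx s - a \<noteq> 0 then 1 else 0)"
      using lev_upd[OF s(1,2), where b=False and e="mx s - a" and m=mx] wxid by (simp add: src_def x)
    then have "q \<le> lev n src" using lx lc s(3,4) a0 by (auto split: if_splits)
    then have Dsrc: "DD n src = DD n c'" using g'z[of src] gs lc' by auto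
    then have "lev n src = q" using lev_DD[OF Dsrc] lc' by simp
    then have msa: "mx s = a" using lu lx lc s(3,4) a0 by (auto split: if_splits)
    have d1: "DD n src = add_mset (False, 0) (DD n x - {#(False, a)#})"
      using DD_upd[OF s(1,2), where b=False and e=0 and m=mx] wxid s(3) msa by (simp add: src_def x)
    have d2: "DD n c' = add_mset (False, 0) (DD n c - {#(False, a)#})"
      using DD_upd[OF pn S(1), where b=False and e=0 and m=m] wpid wp by (simp add: c'_def c a_def)
    have "DD n x - {#(False, a)#} = DD n c - {#(False, a)#}" using Dsrc d1 d2 by simp
    moreover have "(False, a) \<in># DD n x" using mem_DD[OF s(1), of wx mx] s(3) msa by (simp add: x)
    moreover have "(False, a) \<in># DD n c" using mem_DD[OF pn, of w m] wp by (simp add: c a_def)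
    ultimately have "DD n x = DD n c" by (metis insert_DiffM[of "(False, a)" "DD n x"] insert_DiffM[of "(False, a)" "DD n c"])
    then show False using dx by simp
  qed
  have "Tri n ?h c" unfolding Tri_def using hM hc0 hz by blast
  then show ?thesis by blast
qed

lemma construct: "shapeok n k c \<Longrightarrow> \<exists>g. Tri n g c"
proof -
  have "\<forall>c. shapeok n k c \<longrightarrow> lev n c = q \<longrightarrow> (\<exists>g. Tri n g c)" for q
  proof (induction q)
    case 0 then show ?case using base_Tri by blast
  next
    case (Suc q)
    show ?case
    proof (intro allI impI)
      fix c assume "shapeok n k c" "lev n c = Suc q"
      then show "\<exists>g. Tri n g c" using step_Tri[of n k c q] Suc.IH by blast
    qed
  qed
  then show "shapeok n k c \<Longrightarrow> \<exists>g. Tri n g c" by blast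
qed

lemma canon_shape:
  assumes f: "f \<in> VS n" and v: "valid n c" and d: "dec n c" and fc: "f c \<noteq> 0"
  shows "\<exists>k. shapeok n k c"
proof -
  obtain w m where c: "c = (w, m)" by (cases c)
  have len: "length w = n" and mz: "\<forall>t\<ge>n. m t = 0" using v by (auto simp: valid_def c)
  have mono: "\<And>s t. s \<le> t \<Longrightarrow> t < n \<Longrightarrow> (w ! t, m t) \<le> (w ! s, m s)"
    using d by (intro dec_mono) (simp_all add: c)
  define k where "k = (if \<exists>s<n. \<not> w ! s then (LEAST s. s < n \<and> \<not> w ! s) else n)"
  have wk: "w ! s = (s < k)" if sn: "s < n" for s
  proof (cases "\<exists>s<n. \<not> w ! s")
    case True
    then have k: "k = (LEAST s. s < n \<and> \<not> w ! s)" by (simp add: k_def)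
    have kP: "k < n \<and> \<not> w ! k" unfolding k using True by (metis (mono_tags, lifting) LeastI)
    show ?thesis
    proof (cases "s < k")
      case True
      then have "\<not> (s < n \<and> \<not> w ! s)" unfolding k by (rule not_less_Least)
      then show ?thesis using sn True by simp
    next
      case False
      then have "(w ! s, m s) \<le> (w ! k, m k)" using mono[of k s] sn by simp
      then show ?thesis using kP False by (auto simp: less_bool_def)
    qed
  next
    case False
    have "k = n" unfolding k_def by (rule if_not_P[OF False])
    then show ?thesis using False sn by auto
  qed
  have kn: "k \<le> n"
  proof (cases "\<exists>s<n. \<not> w ! s")
    case True
    then obtain s where s: "s < n \<and> \<not> w ! s" by blast
    then have "(LEAST s. s < n \<and> \<not> w ! s) \<le> s" by (rule Least_le)
    moreover have "k = (LEAST s. s < n \<and> \<not> w ! s)" unfolding k_def by (rule if_P[OF True])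
    ultimately show ?thesis using s by simp
  next
    case False
    have "k = n" unfolding k_def by (rule if_not_P[OF False])
    then show ?thesis by simp
  qed
  have dodd: "m s \<noteq> m t" if st: "s < t" "t < k" for s t
  proof
    assume eq: "m s = m t"
    have tn: "t < n" using st kn by simp
    have sn: "Suc s < n" using st tn by simp
    have ws: "w ! s" "w ! t" "w ! Suc s" using wk st tn sn by auto
    have "(w ! t, m t) \<le> (w ! Suc s, m (Suc s))" using mono[of "Suc s" t] st tn by simp
    moreover have "(w ! Suc s, m (Suc s)) \<le> (w ! s, m s)" using mono[of s "Suc s"] sn by simp
    ultimately have ms: "m (Suc s) = m s" using ws eq by (auto simp: less_bool_def)
    have twid: "tw s w = w" using ws len sn by (intro nth_equalityI) (auto simp: nth_list_update split: if_splits)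
    have tmid: "tm s m = m" using ms by (auto simp: fun_eq_iff)
    have "f (tw s w, tm s m) = sg w s * f (w, m)" by (rule VS_swap[OF f sn])
    then have "f (w, m) = sg w s * f (w, m)" by (simp only: twid tmid)
    moreover have "sg w s = -1" using ws by (simp add: sg_def)
    ultimately have "f (w, m) = - f (w, m)" by simp
    then have "f (w, m) = 0" by simp
    then show False using fc by (simp add: c)
  qed
  have sev: "m t \<le> m s" if "k \<le> s" "s \<le> t" "t < n" for s t
  proof -
    have "(w ! t, m t) \<le> (w ! s, m s)" using mono that by simp
    moreover have "\<not> w ! s" "\<not> w ! t" using wk that by auto
    ultimately show ?thesis by (auto simp: less_bool_def)
  qed
  have "shapeok n k c" unfolding shapeok_def c using v wk kn dodd sev by (auto simp: c)
  then show ?thesis by blast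
qed

lemma zero_M: "(\<lambda>x. 0) \<in> gen_submod n (vone n)"
proof -
  have "(\<lambda>x. 0 * vone n x) \<in> gen_submod n (vone n)" by (rule gen_submod.smult[OF gen_submod.base])
  then show ?thesis by simp
qed

lemma VS_M_aux:
  "\<forall>f. f \<in> VS n \<longrightarrow> (\<forall>x. f x \<noteq> 0 \<longrightarrow> lev n x \<le> L) \<longrightarrow> f \<in> gen_submod n (vone n)"
proof (induction L rule: less_induct)
  case (less L)
  have emp: "f \<in> gen_submod n (vone n)" if fV: "f \<in> VS n" and lt: "\<forall>x. f x \<noteq> 0 \<longrightarrow> lev n x < L" for f
  proof (cases L)
    case 0
    then have "f = (\<lambda>x. 0)" using lt by (auto simp: fun_eq_iff)
    then show ?thesis using zero_M by simp
  next
    case (Suc L')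
    then have "\<forall>x. f x \<noteq> 0 \<longrightarrow> lev n x \<le> L'" using lt by (auto simp: less_Suc_eq_le)
    then show ?thesis using less.IH[of L'] fV Suc by blast
  qed
  have inner: "\<forall>f. f \<in> VS n \<longrightarrow> (\<forall>x. f x \<noteq> 0 \<longrightarrow> lev n x \<le> L)
      \<longrightarrow> card (DD n ` {x. f x \<noteq> 0 \<and> lev n x = L}) \<le> N \<longrightarrow> f \<in> gen_submod n (vone n)" for N
  proof (induction N)
    case 0
    show ?case
    proof (intro allI impI)
      fix f assume fV: "f \<in> VS n" and le: "\<forall>x. f x \<noteq> 0 \<longrightarrow> lev n x \<le> L"
        and cd: "card (DD n ` {x. f x \<noteq> 0 \<and> lev n x = L}) \<le> 0"
      have "finite {x. f x \<noteq> 0}" using fV by (simp add: VS_def Vsp_def)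
      then have "finite (DD n ` {x. f x \<noteq> 0 \<and> lev n x = L})" by simp
      then have "DD n ` {x. f x \<noteq> 0 \<and> lev n x = L} = {}" using cd by simp
      then have "\<forall>x. f x \<noteq> 0 \<longrightarrow> lev n x < L" using le by (auto simp: order_le_less)
      then show "f \<in> gen_submod n (vone n)" by (rule emp[OF fV])
    qed
  next
    case (Suc N)
    show ?case
    proof (intro allI impI)
      fix f assume fV: "f \<in> VS n" and le: "\<forall>x. f x \<noteq> 0 \<longrightarrow> lev n x \<le> L"
        and cd: "card (DD n ` {x. f x \<noteq> 0 \<and> lev n x = L}) \<le> Suc N"
      have fVsp: "f \<in> Vsp n" using fV by (simp add: VS_def)
      have finS: "finite {x. f x \<noteq> 0}" using fV by (simp add: VS_def Vsp_def)
      then have fin: "finite (DD n ` {x. f x \<noteq> 0 \<and> lev n x = L})" by simp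
      show "f \<in> gen_submod n (vone n)"
      proof (cases "\<exists>x0. f x0 \<noteq> 0 \<and> lev n x0 = L")
        case False
        then have "\<forall>x. f x \<noteq> 0 \<longrightarrow> lev n x < L" using le by (auto simp: order_le_less)
        then show ?thesis by (rule emp[OF fV])
      next
        case True
        then obtain x0 where x0: "f x0 \<noteq> 0" "lev n x0 = L" by blast
        have vx0: "valid n x0" using Vsp_valid[OF fVsp x0(1)] .
        obtain c where c: "valid n c" "dec n c" "DD n c = DD n x0" using dec_exists[OF vx0] by blast
        have fc: "f c \<noteq> 0"
        proof
          assume "f c = 0"
          then have "f x0 = 0" using Z_lemma[OF fV c(1,2)] vx0 c(3) by simp
          then show False using x0 by simp
        qed
        obtain k where sh: "shapeok n k c" using canon_shape[OF fV c(1,2) fc] by blast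
        obtain g where T: "Tri n g c" using construct[OF sh] by blast
        have gM: "g \<in> gen_submod n (vone n)" and gc: "g c \<noteq> 0"
          and gz: "\<And>x. DD n x \<noteq> DD n c \<Longrightarrow> lev n c \<le> lev n x \<Longrightarrow> g x = 0"
          using T by (auto simp: Tri_def)
        have gV: "g \<in> VS n" by (rule M_VS[OF gM])
        define lam where "lam = f c / g c"
        define f' where "f' = (\<lambda>x. f x + (- lam) * g x)"
        have f'V: "f' \<in> VS n" unfolding f'_def by (intro VS_add fV VS_smult gV)
        have f'c: "f' c = 0" using gc by (simp add: f'_def lam_def)
        have Zf: "f' y = 0" if "valid n y" "DD n y = DD n c" for y
          using Z_lemma[OF f'V c(1,2) f'c] that by simp
        have lcL: "lev n c = L" using lev_DD[OF c(3)] x0 by simp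
        have key: "lev n y \<le> L \<and> DD n y \<noteq> DD n c \<and> (lev n y = L \<longrightarrow> f y \<noteq> 0)" if nz: "f' y \<noteq> 0" for y
        proof -
          have "f' \<in> Vsp n" using f'V by (simp add: VS_def)
          then have "valid n y" using Vsp_valid[of f' n y] nz by simp
          then have dy: "DD n y \<noteq> DD n c" using Zf nz by blast
          show ?thesis
          proof (cases "lev n c \<le> lev n y")
            case True
            then have "g y = 0" using gz dy by simp
            then have "f y \<noteq> 0" using nz by (simp add: f'_def)
            then show ?thesis using le[rule_format, of y] dy by simp
          next
            case False
            then show ?thesis using lcL dy by simp
          qed
        qed
        have le': "\<forall>x. f' x \<noteq> 0 \<longrightarrow> lev n x \<le> L"
        proof (intro allI impI)
          fix x assume "f' x \<noteq> 0" then show "lev n x \<le> L" using key[of x] by simp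
        qed
        have sub: "DD n ` {x. f' x \<noteq> 0 \<and> lev n x = L} \<subseteq> DD n ` {x. f x \<noteq> 0 \<and> lev n x = L} - {DD n c}"
        proof
          fix z assume "z \<in> DD n ` {x. f' x \<noteq> 0 \<and> lev n x = L}"
          then obtain y where y: "z = DD n y" "f' y \<noteq> 0" "lev n y = L" by blast
          then have d: "DD n y \<noteq> DD n c" "f y \<noteq> 0" using key[OF y(2)] by simp_all
          have "y \<in> {x. f x \<noteq> 0 \<and> lev n x = L}" using d y by simp
          then have "z \<in> DD n ` {x. f x \<noteq> 0 \<and> lev n x = L}" unfolding y(1) by (rule imageI)
          moreover have "z \<notin> {DD n c}" using y d by simp
          ultimately show "z \<in> DD n ` {x. f x \<noteq> 0 \<and> lev n x = L} - {DD n c}" by (rule DiffI)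
        qed
        have mem: "DD n c \<in> DD n ` {x. f x \<noteq> 0 \<and> lev n x = L}" using x0 c(3) by blast
        have "card (DD n ` {x. f' x \<noteq> 0 \<and> lev n x = L}) \<le> card (DD n ` {x. f x \<noteq> 0 \<and> lev n x = L} - {DD n c})"
          using sub fin by (intro card_mono) auto
        also have "\<dots> = card (DD n ` {x. f x \<noteq> 0 \<and> lev n x = L}) - 1" using mem fin by simp
        also have "\<dots> \<le> N" using cd by simp
        finally have cd': "card (DD n ` {x. f' x \<noteq> 0 \<and> lev n x = L}) \<le> N" .
        have f'M: "f' \<in> gen_submod n (vone n)" by (rule mp[OF mp[OF mp[OF spec[OF Suc.IH, of f'] f'V] le'] cd'])
        have "(\<lambda>x. f' x + lam * g x) \<in> gen_submod n (vone n)"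
          by (intro gen_submod.add f'M gen_submod.smult gM)
        moreover have "(\<lambda>x. f' x + lam * g x) = f" by (simp add: f'_def fun_eq_iff)
        ultimately show ?thesis by simp
      qed
    qed
  qed
  show ?case
  proof (intro allI impI)
    fix f assume a1: "f \<in> VS n" and a2: "\<forall>x. f x \<noteq> 0 \<longrightarrow> lev n x \<le> L"
    have a3: "card (DD n ` {x. f x \<noteq> 0 \<and> lev n x = L}) \<le> card (DD n ` {x. f x \<noteq> 0 \<and> lev n x = L})" by simp
    show "f \<in> gen_submod n (vone n)"
      by (rule mp[OF mp[OF mp[OF spec[OF inner, of f] a1] a2] a3])
  qed
qed

theorem lemma3p10:
  fixes n :: nat
  shows "gen_submod n (vone n) = VS n"
proof
  show "gen_submod n (vone n) \<subseteq> VS n" using M_VS by blast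
next
  show "VS n \<subseteq> gen_submod n (vone n)"
  proof
    fix f assume f: "f \<in> VS n"
    let ?L = "Max (insert 0 (lev n ` {x. f x \<noteq> 0}))"
    have "finite {x. f x \<noteq> 0}" using f by (simp add: VS_def Vsp_def)
    then have fin: "finite (insert 0 (lev n ` {x. f x \<noteq> 0}))" by simp
    have hx: "\<forall>x. f x \<noteq> 0 \<longrightarrow> lev n x \<le> ?L"
    proof (intro allI impI)
      fix x assume "f x \<noteq> 0"
      then have "lev n x \<in> insert 0 (lev n ` {x. f x \<noteq> 0})" by simp
      then show "lev n x \<le> ?L" using fin by (rule Max_ge[rotated])
    qed
    show "f \<in> gen_submod n (vone n)" by (rule mp[OF mp[OF spec[OF VS_M_aux[of n ?L], of f] f] hx])
  qed
qed

end
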